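(* Let $k\in\mathbb{N}$, $P$ the uniform distribution on $[0,1]$, $\beta=\{\frac jk:1\leq j\leq k\}$, and $J_{k,j}=[\frac{j-1}k,\frac jk]$ for $1\leq j\leq k$. Let $n\geq k$, let $\alpha_n$ be a conditional optimal set of $n$-points for $P$ with respect to $\beta$, and put $n_j=\mathrm{card}(\alpha_n\cap J_{k,j})$. Then for $2\leq i<j\leq k$, $|n_i-n_j|\in\{0,1\}$.
   Context: For a Borel probability measure $P$ on $\mathbb{R}$ and finite $\beta$ with $\mathrm{card}(\beta)=r$, for $n\ge r$, $V_n=\inf\{\int\min_{a\in\alpha\cup\beta}(x-a)^2dP(x):\mathrm{card}(\alpha)\le n-r\}$; a set $\alpha\cup\beta$ attaining the infimum, with each point of $\beta$ having a Voronoi region of positive $P$-measure, is a conditional optimal set of $n$-points with respect to $\beta$ (it contains $\beta$). *)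

theory Defs
  imports "HOL-Analysis.Analysis"
begin

definition distortion :: "real measure \<Rightarrow> real set \<Rightarrow> real" where
  "distortion P \<gamma> = (\<integral>x. Min ((\<lambda>a. (x - a)\<^sup>2) ` \<gamma>) \<partial>P)"

definition cond_quant_error :: "real measure \<Rightarrow> real set \<Rightarrow> nat \<Rightarrow> real" where
  "cond_quant_error P \<beta> n =
     Inf {distortion P (\<alpha> \<union> \<beta>) | \<alpha>. finite \<alpha> \<and> card \<alpha> \<le> n - card \<beta>}"

definition voronoi_region :: "real set \<Rightarrow> real \<Rightarrow> real set" where
  "voronoi_region \<gamma> b = {x. \<forall>a\<in>\<gamma>. \<bar>x - b\<bar> \<le> \<bar>x - a\<bar>}"

definition cond_optimal_set :: "real measure \<Rightarrow> real set \<Rightarrow> nat \<Rightarrow> real set \<Rightarrow> bool" where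
  "cond_optimal_set P \<beta> n \<gamma> \<longleftrightarrow>
     finite \<beta> \<and> card \<beta> \<le> n \<and>
     (\<exists>\<alpha>. finite \<alpha> \<and> card \<alpha> \<le> n - card \<beta> \<and> \<gamma> = \<alpha> \<union> \<beta>) \<and>
     distortion P \<gamma> = cond_quant_error P \<beta> n \<and>
     (\<forall>b\<in>\<beta>. measure P (voronoi_region \<gamma> b) > 0)"

end

theory Submission
  imports Defs
begin


definition hS :: "real set \<Rightarrow> real \<Rightarrow> real" where
  "hS S x = Min ((\<lambda>a. (x - a)\<^sup>2) ` S)"

lemma hS_cont: "finite S \<Longrightarrow> S \<noteq> {} \<Longrightarrow> continuous_on A (hS S)"
proof (induction S rule: finite_ne_induct)
  case (singleton x)
  then show ?case by (auto simp: hS_def intro!: continuous_intros)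
next
  case (insert x F)
  have "hS (insert x F) = (\<lambda>y. min ((y - x)\<^sup>2) (hS F y))"
    using insert by (auto simp: hS_def fun_eq_iff)
  then show ?case using insert by (auto intro!: continuous_intros)
qed

lemma unif_integral:
  fixes f :: "real \<Rightarrow> real"
  assumes "continuous_on UNIV f"
  shows "integral\<^sup>L (uniform_measure lborel {0..1::real}) f = integral {0..1} f"
proof -
  have d: "uniform_measure lborel {0..1::real} = density lborel (\<lambda>x. ennreal (indicator {0..1::real} x))"
    unfolding uniform_measure_def by (auto intro!: density_cong simp: indicator_def)
  have m: "f \<in> borel_measurable lborel"
    using assms by (simp add: borel_measurable_continuous_onI)
  have "integral\<^sup>L (uniform_measure lborel {0..1::real}) f = integral\<^sup>L lborel (\<lambda>x. indicator {0..1::real} x *\<^sub>R f x)"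
    unfolding d by (rule integral_density[OF m]) auto
  also have "\<dots> = (LINT x : {0..1} | lborel. f x)"
    by (simp add: set_lebesgue_integral_def)
  also have "\<dots> = integral {0..1} f"
    by (rule set_borel_integral_eq_integral(2), rule borel_integrable_atLeastAtMost')
       (use assms continuous_on_subset in blast)
  finally show ?thesis .
qed

lemma distortion_eq:
  assumes "finite S" "S \<noteq> {}" shows "distortion (uniform_measure lborel {0..1}) S = integral {0..1} (hS S)"
proof -
  have "(\<lambda>x. Min ((\<lambda>a. (x - a)\<^sup>2) ` S)) = hS S" by (simp add: hS_def fun_eq_iff)
  then show ?thesis unfolding distortion_def
    using unif_integral[OF hS_cont[of S UNIV]] assms by simp
qed

lemma hS_integrable: "finite S \<Longrightarrow> S \<noteq> {} \<Longrightarrow> hS S integrable_on {a..b}"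
  by (rule integrable_continuous_interval, rule hS_cont)
lemma hS_combine: "finite S \<Longrightarrow> S \<noteq> {} \<Longrightarrow> (a::real) \<le> c \<Longrightarrow> c \<le> b \<Longrightarrow> integral {a..c} (hS S) + integral {c..b} (hS S) = integral {a..b} (hS S)"
  by (rule Henstock_Kurzweil_Integration.integral_combine) (auto intro: hS_integrable)



lemma sq_integral:
  fixes a b c :: real assumes "a \<le> b"
  shows "((\<lambda>x. (x - c)\<^sup>2) has_integral ((b - c)^3/3 - (a - c)^3/3)) {a..b}"
proof -
  have "((\<lambda>x. (x - c)\<^sup>2) has_integral ((\<lambda>x. (x - c)^3/3) b - (\<lambda>x. (x - c)^3/3) a)) {a..b}"
    apply (rule fundamental_theorem_of_calculus[OF assms])
    apply (auto intro!: derivative_eq_intros simp: has_real_derivative_iff_has_vector_derivative[symmetric] power2_eq_square)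
    done
  then show ?thesis by simp
qed

lemma tent_integral:
  fixes a b :: real assumes "a \<le> b"
  shows "((\<lambda>x. min ((x - a)\<^sup>2) ((x - b)\<^sup>2)) has_integral (b - a)^3/12) {a..b}"
proof -
  define c where "c = (a + b) / 2"
  have ac: "a \<le> c" "c \<le> b" using assms by (auto simp: c_def)
  have 1: "((\<lambda>x. min ((x - a)\<^sup>2) ((x - b)\<^sup>2)) has_integral ((c - a)^3/3 - (a - a)^3/3)) {a..c}"
  proof (rule has_integral_eq[OF _ sq_integral[OF ac(1)]])
    fix x assume "x \<in> {a..c}"
    then have "(x - a)\<^sup>2 \<le> (x - b)\<^sup>2" using ac unfolding c_def
      by (auto intro!: power_mono_even simp: abs_if) 
    then show "(x - a)\<^sup>2 = min ((x - a)\<^sup>2) ((x - b)\<^sup>2)" by simp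
  qed
  have 2: "((\<lambda>x. min ((x - a)\<^sup>2) ((x - b)\<^sup>2)) has_integral ((b - b)^3/3 - (c - b)^3/3)) {c..b}"
  proof (rule has_integral_eq[OF _ sq_integral[OF ac(2)]])
    fix x assume "x \<in> {c..b}"
    then have "(x - b)\<^sup>2 \<le> (x - a)\<^sup>2" using ac unfolding c_def
      by (auto intro!: power_mono_even simp: abs_if) 
    then show "(x - b)\<^sup>2 = min ((x - a)\<^sup>2) ((x - b)\<^sup>2)" by simp
  qed
  have "((\<lambda>x. min ((x - a)\<^sup>2) ((x - b)\<^sup>2)) has_integral ((c - a)^3/3 - (a - a)^3/3) + ((b - b)^3/3 - (c - b)^3/3)) {a..b}"
    by (rule has_integral_combine[OF ac 1 2])
  moreover have "((c - a)^3/3 - (a - a)^3/3) + ((b - b)^3/3 - (c - b)^3/3) = (b - a)^3/12"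
    unfolding c_def by (simp add: field_simps power3_eq_cube)
  ultimately show ?thesis by metis
qed

lemma hS_le: "finite S \<Longrightarrow> s \<in> S \<Longrightarrow> hS S x \<le> (x - s)\<^sup>2"
  unfolding hS_def by (rule Min_le) auto


lemma upper:
  fixes a d :: real
  assumes "finite S" "d \<ge> 0" "\<And>r. r \<le> N \<Longrightarrow> a + real r * d \<in> S"
  shows "integral {a..a + real N * d} (hS S) \<le> real N * d^3/12"
  using assms(3)
proof (induction N)
  case 0
  then show ?case by simp
next
  case (Suc N)
  have ne: "S \<noteq> {}" using Suc.prems[of 0] by auto
  have IH: "integral {a..a + real N * d} (hS S) \<le> real N * d^3/12"
    using Suc by auto
  let ?t = "a + real N * d"
  have t1: "?t \<in> S" "?t + d \<in> S" using Suc.prems[of N] Suc.prems[of "Suc N"]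
    by (auto simp: algebra_simps)
  have "integral {?t..?t + d} (hS S) \<le> integral {?t..?t + d} (\<lambda>x. min ((x - ?t)\<^sup>2) ((x - (?t + d))\<^sup>2))"
    apply (rule integral_le)
    using hS_integrable[OF assms(1) ne] tent_integral[of ?t "?t + d"] assms(2) hS_le[OF assms(1) t1(1)] hS_le[OF assms(1) t1(2)]
    by auto
  also have "\<dots> = d^3/12" using tent_integral[of ?t "?t + d"] assms(2) by (simp add: integral_unique)
  finally have 2: "integral {?t..?t + d} (hS S) \<le> d^3/12" .
  have "integral {a..?t} (hS S) + integral {?t..?t + d} (hS S) = integral {a..?t + d} (hS S)"
    by (rule hS_combine) (use assms ne in auto)
  moreover have "?t + d = a + real (Suc N) * d" by (simp add: algebra_simps)
  ultimately show ?case using IH 2 by (simp add: algebra_simps)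
qed

lemma ineq:
  fixes u v q :: real
  assumes "u \<ge> 0" "v \<ge> 0" "q \<ge> 1"
  shows "(u + v)^3/(q + 1)^2 \<le> u^3 + v^3/q^2"
proof -
  define t where "t = v / q"
  have v: "v = q * t" using assms unfolding t_def by simp
  have t0: "t \<ge> 0" using assms unfolding t_def by simp
  have e: "(q+1)^2*(u^3+q*t^3) - (u+q*t)^3 = q*(q*((u-t)^2*(u+2*t)) + (u-t)^2*(2*u+t))"
    by (simp add: algebra_simps power2_eq_square power3_eq_cube)
  have "0 \<le> q*(q*((u-t)^2*(u+2*t)) + (u-t)^2*(2*u+t))"
    using assms t0 by (intro mult_nonneg_nonneg add_nonneg_nonneg) auto
  then have "(u+q*t)^3 \<le> (q+1)^2*(u^3+q*t^3)" using e by linarith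
  moreover have "(q+1)^2 > 0" using assms by simp
  ultimately have "(u+q*t)^3/(q+1)^2 \<le> u^3+q*t^3"
    by (simp add: pos_divide_le_eq mult.commute)
  moreover have "q*t^3 = v^3/q^2" using assms unfolding v by (simp add: power2_eq_square power3_eq_cube)
  ultimately show ?thesis unfolding v by simp
qed




lemma low0:
  fixes a b :: real
  assumes "finite S" "a \<le> b" "a \<in> S" "b \<in> S" "S \<inter> {a<..<b} = {}"
  shows "(b - a)^3/12 \<le> integral {a..b} (hS S)"
proof -
  have ne: "S \<noteq> {}" using assms by auto
  have "integral {a..b} (\<lambda>x. min ((x - a)\<^sup>2) ((x - b)\<^sup>2)) \<le> integral {a..b} (hS S)"
  proof (rule integral_le)
    show "(\<lambda>x. min ((x - a)\<^sup>2) ((x - b)\<^sup>2)) integrable_on {a..b}"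
      using tent_integral[OF assms(2)] by blast
    show "hS S integrable_on {a..b}" using hS_integrable[OF assms(1) ne] .
    fix x assume x: "x \<in> {a..b}"
    show "min ((x - a)\<^sup>2) ((x - b)\<^sup>2) \<le> hS S x"
      unfolding hS_def
    proof (rule Min.boundedI)
      show "finite ((\<lambda>a. (x - a)\<^sup>2) ` S)" using assms by auto
      show "(\<lambda>a. (x - a)\<^sup>2) ` S \<noteq> {}" using ne by auto
      fix y assume "y \<in> (\<lambda>a. (x - a)\<^sup>2) ` S"
      then obtain s where s: "s \<in> S" "y = (x - s)\<^sup>2" by auto
      then have "s \<le> a \<or> s \<ge> b" using assms(5) by force
      then show "min ((x - a)\<^sup>2) ((x - b)\<^sup>2) \<le> y"
      proof
        assume "s \<le> a"
        then have "(x - a)\<^sup>2 \<le> (x - s)\<^sup>2" using x by (intro power_mono) auto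
        then show ?thesis using s by simp
      next
        assume "s \<ge> b"
        then have "(x - b)\<^sup>2 \<le> (x - s)\<^sup>2" using x by (intro power_mono_even) auto
        then show ?thesis using s by simp
      qed
    qed
  qed
  then show ?thesis using tent_integral[OF assms(2)] by (simp add: integral_unique)
qed

lemma low:
  fixes a b :: real
  assumes "finite S" "a \<le> b" "a \<in> S" "b \<in> S" "card (S \<inter> {a<..<b}) = m"
  shows "(b - a)^3/(12 * (real m + 1)^2) \<le> integral {a..b} (hS S)"
  using assms
proof (induction m arbitrary: a)
  case 0
  then have "S \<inter> {a<..<b} = {}" using assms(1) by auto
  then show ?case using low0[OF 0(1-4)] by simp
next
  case (Suc m)
  define T where "T = S \<inter> {a<..<b}"
  have fT: "finite T" using Suc.prems unfolding T_def by auto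
  have neT: "T \<noteq> {}" using Suc.prems unfolding T_def by auto
  define c where "c = Min T"
  have cT: "c \<in> T" using fT neT unfolding c_def by auto
  then have c: "a < c" "c < b" "c \<in> S" unfolding T_def by auto
  have e1: "S \<inter> {a<..<c} = {}"
  proof (rule ccontr)
    assume "S \<inter> {a<..<c} \<noteq> {}"
    then obtain y where "y \<in> S" "a < y" "y < c" by auto
    then have "y \<in> T" using c unfolding T_def by auto
    then have "c \<le> y" unfolding c_def using fT by auto
    then show False using \<open>y < c\<close> by simp
  qed
  have e2: "S \<inter> {c<..<b} = T - {c}"
  proof
    show "S \<inter> {c<..<b} \<subseteq> T - {c}" using c unfolding T_def by auto
    show "T - {c} \<subseteq> S \<inter> {c<..<b}"
    proof
      fix y assume y: "y \<in> T - {c}"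
      then have "c \<le> y" unfolding c_def using fT by auto
      then show "y \<in> S \<inter> {c<..<b}" using y unfolding T_def by auto
    qed
  qed
  have cm: "card (S \<inter> {c<..<b}) = m" unfolding e2 using cT fT Suc.prems(5) T_def by auto
  have I1: "(b - c)^3/(12 * (real m + 1)^2) \<le> integral {c..b} (hS S)"
    using Suc.IH[OF Suc.prems(1) _ c(3) Suc.prems(4) cm] c by simp
  have I2: "(c - a)^3/12 \<le> integral {a..c} (hS S)"
    using low0[OF Suc.prems(1) _ Suc.prems(3) c(3) e1] c by simp
  have comb: "integral {a..c} (hS S) + integral {c..b} (hS S) = integral {a..b} (hS S)"
    using hS_combine[OF Suc.prems(1) _, of a c b] c Suc.prems by auto
  have "((c - a) + (b - c))^3/((real m + 1) + 1)^2 \<le> (c - a)^3 + (b - c)^3/(real m + 1)^2"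
    by (rule ineq) (use c in auto)
  then have "(b - a)^3/(12 * (real (Suc m) + 1)^2) \<le> (c - a)^3/12 + (b - c)^3/(12 * (real m + 1)^2)"
    by (simp add: add.commute add.left_commute)
  then show ?case using I1 I2 comb by linarith
qed




lemma loc:
  fixes a b x :: real
  assumes "finite S" "a \<in> S" "b \<in> S" "x \<notin> {a<..<b}" "a \<notin> {a<..<b}" 
  shows "hS S x = hS (S - {a<..<b}) x"
proof (rule antisym)
  have fin: "finite (S - {a<..<b})" using assms by auto
  have ab: "a \<in> S - {a<..<b}" using assms by auto
  have bb: "b \<in> S - {a<..<b}" using assms by auto
  show "hS S x \<le> hS (S - {a<..<b}) x"
    unfolding hS_def by (rule Min_antimono) (use assms ab in auto)
  show "hS (S - {a<..<b}) x \<le> hS S x"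
    unfolding hS_def
  proof (rule Min.boundedI)
    show "finite ((\<lambda>a. (x - a)\<^sup>2) ` S)" using assms by auto
    show "(\<lambda>a. (x - a)\<^sup>2) ` S \<noteq> {}" using assms by auto
    fix y assume "y \<in> (\<lambda>a. (x - a)\<^sup>2) ` S"
    then obtain s where s: "s \<in> S" "y = (x - s)\<^sup>2" by auto
    show "Min ((\<lambda>a. (x - a)\<^sup>2) ` (S - {a<..<b})) \<le> y"
    proof (cases "s \<in> {a<..<b}")
      case False
      then show ?thesis using s fin by (intro Min_le) auto
    next
      case True
      then have "x \<le> a \<or> x \<ge> b" using assms(4) by auto
      then show ?thesis
      proof
        assume xa: "x \<le> a"
        have "Min ((\<lambda>a. (x - a)\<^sup>2) ` (S - {a<..<b})) \<le> (x - a)\<^sup>2"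
          using fin ab by (intro Min_le) auto
        also have "\<dots> \<le> (x - s)\<^sup>2" using xa True by (intro power_mono_even) auto
        finally show ?thesis using s by simp
      next
        assume xb: "x \<ge> b"
        have "Min ((\<lambda>a. (x - a)\<^sup>2) ` (S - {a<..<b})) \<le> (x - b)\<^sup>2"
          using fin bb by (intro Min_le) auto
        also have "\<dots> \<le> (x - s)\<^sup>2" using xb True by (intro power_mono) auto
        finally show ?thesis using s by simp
      qed
    qed
  qed
qed

lemma split5:
  fixes a1 b1 a2 b2 :: real
  assumes "finite S" "S \<noteq> {}" "0 \<le> a1" "a1 \<le> b1" "b1 \<le> a2" "a2 \<le> b2" "b2 \<le> 1"
  shows "integral {0..1} (hS S) = integral {0..a1} (hS S) + integral {a1..b1} (hS S)
     + integral {b1..a2} (hS S) + integral {a2..b2} (hS S) + integral {b2..1} (hS S)"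
proof -
  have "integral {0..1} (hS S) = integral {0..b2} (hS S) + integral {b2..1} (hS S)"
    using hS_combine[OF assms(1,2), of 0 b2 1] assms by auto
  moreover have "integral {0..b2} (hS S) = integral {0..a2} (hS S) + integral {a2..b2} (hS S)"
    using hS_combine[OF assms(1,2), of 0 a2 b2] assms by auto
  moreover have "integral {0..a2} (hS S) = integral {0..b1} (hS S) + integral {b1..a2} (hS S)"
    using hS_combine[OF assms(1,2), of 0 b1 a2] assms by auto
  moreover have "integral {0..b1} (hS S) = integral {0..a1} (hS S) + integral {a1..b1} (hS S)"
    using hS_combine[OF assms(1,2), of 0 a1 b1] assms by auto
  ultimately show ?thesis by simp
qed




lemma grid:
  fixes a L :: real and p :: nat
  assumes "L > 0"
  defines "N \<equiv> (\<lambda>r. a + real r * (L / (real p + 1))) ` {1..p}"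
  shows "N \<subseteq> {a<..<a+L}" "card N = p" "finite N"
    "\<And>r. r \<le> p + 1 \<Longrightarrow> a + real r * (L / (real p + 1)) \<in> N \<union> {a, a + L}"
proof -
  let ?d = "L / (real p + 1)"
  have d: "?d > 0" using assms by simp
  show "finite N" unfolding N_def by simp
  show "card N = p" unfolding N_def
    by (subst card_image) (use d in \<open>auto simp: inj_on_def\<close>)
  show "N \<subseteq> {a<..<a+L}"
  proof
    fix y assume "y \<in> N"
    then obtain r where r: "1 \<le> r" "r \<le> p" "y = a + real r * ?d" unfolding N_def by auto
    have "real r * ?d > 0" using r d by (intro mult_pos_pos) auto
    moreover have "real r * ?d < (real p + 1) * ?d"
      using r d by (intro mult_strict_right_mono) auto
    moreover have "(real p + 1) * ?d = L" by simp
    ultimately show "y \<in> {a<..<a+L}" using r by auto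
  qed
  fix r assume r: "r \<le> p + 1"
  show "a + real r * ?d \<in> N \<union> {a, a + L}"
  proof (cases "r = 0 \<or> r = p + 1")
    case True
    have e: "real (p+1) * ?d = L" by (simp add: field_simps)
    show ?thesis using True e by auto
  next
    case False
    then have "r \<in> {1..p}" using r by auto
    then show ?thesis unfolding N_def by auto
  qed
qed

lemma cube_aux: "(q::real) > 0 \<Longrightarrow> q * (L / q)^3/12 = L^3/(12*q^2)"
  by (simp add: power_divide power2_eq_square power3_eq_cube)

lemma core:
  fixes a1 b1 a2 b2 L :: real and \<alpha> \<beta> \<gamma> :: "real set"
  assumes fa: "finite \<alpha>" and fb: "finite \<beta>" and g: "\<gamma> = \<alpha> \<union> \<beta>"
    and o: "0 \<le> a1" "a1 < b1" "b1 \<le> a2" "a2 < b2" "b2 \<le> 1"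
    and L: "b1 = a1 + L" "b2 = a2 + L"
    and inb: "a1 \<in> \<beta>" "b1 \<in> \<beta>" "a2 \<in> \<beta>" "b2 \<in> \<beta>"
    and disj: "\<beta> \<inter> {a1<..<b1} = {}" "\<beta> \<inter> {a2<..<b2} = {}"
    and m: "m1 = card (\<gamma> \<inter> {a1<..<b1})" "m2 = card (\<gamma> \<inter> {a2<..<b2})"
    and p: "p1 + p2 = m1 + m2"
    and ineq: "L^3/(12*(real p1+1)^2) + L^3/(12*(real p2+1)^2) < L^3/(12*(real m1+1)^2) + L^3/(12*(real m2+1)^2)"
  shows "\<exists>\<alpha>'. finite \<alpha>' \<and> card \<alpha>' \<le> card \<alpha> \<and> integral {0..1} (hS (\<alpha>' \<union> \<beta>)) < integral {0..1} (hS \<gamma>)"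
proof -
  define A1 where "A1 = {a1<..<b1}"
  define A2 where "A2 = {a2<..<b2}"
  have Lpos: "L > 0" using o L by simp
  define N1 where "N1 = (\<lambda>r. a1 + real r * (L / (real p1 + 1))) ` {1..p1}"
  define N2 where "N2 = (\<lambda>r. a2 + real r * (L / (real p2 + 1))) ` {1..p2}"
  note G1 = grid[OF Lpos, where a=a1 and p=p1, folded N1_def]
  note G2 = grid[OF Lpos, where a=a2 and p=p2, folded N2_def]
  define \<alpha>' where "\<alpha>' = (\<alpha> - A1 - A2) \<union> N1 \<union> N2"
  define \<gamma>' where "\<gamma>' = \<alpha>' \<union> \<beta>"
  have fa': "finite \<alpha>'" unfolding \<alpha>'_def using fa G1 G2 by auto
  have fg: "finite \<gamma>" "finite \<gamma>'" using fa fb fa' g \<gamma>'_def by auto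
  have neg: "\<gamma> \<noteq> {}" "\<gamma>' \<noteq> {}" using inb g \<gamma>'_def by auto
  have A12: "A1 \<inter> A2 = {}" using o unfolding A1_def A2_def by auto
  have c1: "card \<alpha>' \<le> card (\<alpha> - A1 - A2) + p1 + p2"
  proof -
    have "card \<alpha>' \<le> card ((\<alpha> - A1 - A2) \<union> N1) + card N2" unfolding \<alpha>'_def by (rule card_Un_le)
    also have "card ((\<alpha> - A1 - A2) \<union> N1) \<le> card (\<alpha> - A1 - A2) + card N1" by (rule card_Un_le)
    finally show ?thesis using G1 G2 by simp
  qed
  have c2: "card \<alpha> = card (\<alpha> - A1 - A2) + m1 + m2"
  proof -
    have e1: "\<gamma> \<inter> A1 = \<alpha> \<inter> A1" "\<gamma> \<inter> A2 = \<alpha> \<inter> A2" using g disj A1_def A2_def by auto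
    have "\<alpha> = ((\<alpha> - A1 - A2) \<union> (\<alpha> \<inter> A1)) \<union> (\<alpha> \<inter> A2)" by auto
    then have "card \<alpha> = card ((\<alpha> - A1 - A2) \<union> (\<alpha> \<inter> A1)) + card (\<alpha> \<inter> A2)"
      using fa A12 by (metis (no_types, lifting) card_Un_disjoint Int_Un_distrib2 Int_commute Int_left_commute
          Int_lower1 Un_Diff_Int Diff_disjoint boolean_algebra.conj_zero_left finite_Int finite_UnI
          inf.orderE inf_sup_absorb)
    also have "card ((\<alpha> - A1 - A2) \<union> (\<alpha> \<inter> A1)) = card (\<alpha> - A1 - A2) + card (\<alpha> \<inter> A1)"
      using fa by (intro card_Un_disjoint) auto
    finally show ?thesis using m e1 A1_def A2_def by simp
  qed
  have card_ok: "card \<alpha>' \<le> card \<alpha>" using c1 c2 p by simp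
  have same: "\<gamma> - A1 - A2 = \<gamma>' - A1 - A2"
    using G1(1) G2(1) L disj unfolding \<gamma>'_def \<alpha>'_def g A1_def A2_def by auto
  have hloc: "hS S x = hS (S - A1 - A2) x" if "finite S" "a1 \<in> S" "b1 \<in> S" "a2 \<in> S" "b2 \<in> S"
       "x \<notin> A1" "x \<notin> A2" for S x
  proof -
    have "hS S x = hS (S - A1) x" unfolding A1_def
      by (rule loc) (use that A1_def in auto)
    also have "\<dots> = hS (S - A1 - A2) x" unfolding A2_def
      by (rule loc) (use that A2_def A1_def o in auto)
    finally show ?thesis .
  qed
  have eqx: "hS \<gamma> x = hS \<gamma>' x" if "x \<notin> A1" "x \<notin> A2" for x
  proof -
    have "hS \<gamma> x = hS (\<gamma> - A1 - A2) x"
      by (rule hloc) (use that fg inb g in auto)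
    also have "\<dots> = hS (\<gamma>' - A1 - A2) x" using same by simp
    also have "\<dots> = hS \<gamma>' x"
      by (rule hloc[symmetric]) (use that fg inb \<gamma>'_def in auto)
    finally show ?thesis .
  qed
  have o1: "integral {0..a1} (hS \<gamma>) = integral {0..a1} (hS \<gamma>')"
    by (rule Henstock_Kurzweil_Integration.integral_cong, rule eqx) (use o in \<open>auto simp: A1_def A2_def\<close>)
  have o2: "integral {b1..a2} (hS \<gamma>) = integral {b1..a2} (hS \<gamma>')"
    by (rule Henstock_Kurzweil_Integration.integral_cong, rule eqx) (use o in \<open>auto simp: A1_def A2_def\<close>)
  have o3: "integral {b2..1} (hS \<gamma>) = integral {b2..1} (hS \<gamma>')"
    by (rule Henstock_Kurzweil_Integration.integral_cong, rule eqx) (use o in \<open>auto simp: A1_def A2_def\<close>)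
  have l1: "L^3/(12*(real m1+1)^2) \<le> integral {a1..b1} (hS \<gamma>)"
    using low[OF fg(1) _ _ _ m(1)[symmetric]] inb g o L by auto
  have l2: "L^3/(12*(real m2+1)^2) \<le> integral {a2..b2} (hS \<gamma>)"
    using low[OF fg(1) _ _ _ m(2)[symmetric]] inb g o L by auto
  have u1: "integral {a1..b1} (hS \<gamma>') \<le> L^3/(12*(real p1+1)^2)"
  proof -
    have "integral {a1..a1 + real (p1+1) * (L / (real p1 + 1))} (hS \<gamma>') \<le> real (p1+1) * (L / (real p1 + 1))^3/12"
    proof (rule upper[OF fg(2)])
      have "N1 \<union> {a1, a1 + L} \<subseteq> \<gamma>'" using inb L unfolding \<gamma>'_def \<alpha>'_def by auto
      then show "\<And>r. r \<le> p1 + 1 \<Longrightarrow> a1 + real r * (L / (real p1 + 1)) \<in> \<gamma>'" using G1(4) by blast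
    qed (use Lpos in auto)
    moreover have "a1 + real (p1+1) * (L / (real p1 + 1)) = b1" using L by (simp add: field_simps)
    moreover have "real (p1+1) * (L / (real p1 + 1))^3/12 = L^3/(12*(real p1+1)^2)"
      using cube_aux[of "real p1 + 1" L] by (simp add: add.commute)
    ultimately show ?thesis by simp
  qed
  have u2: "integral {a2..b2} (hS \<gamma>') \<le> L^3/(12*(real p2+1)^2)"
  proof -
    have "integral {a2..a2 + real (p2+1) * (L / (real p2 + 1))} (hS \<gamma>') \<le> real (p2+1) * (L / (real p2 + 1))^3/12"
    proof (rule upper[OF fg(2)])
      have "N2 \<union> {a2, a2 + L} \<subseteq> \<gamma>'" using inb L unfolding \<gamma>'_def \<alpha>'_def by auto
      then show "\<And>r. r \<le> p2 + 1 \<Longrightarrow> a2 + real r * (L / (real p2 + 1)) \<in> \<gamma>'" using G2(4) by blast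
    qed (use Lpos in auto)
    moreover have "a2 + real (p2+1) * (L / (real p2 + 1)) = b2" using L by (simp add: field_simps)
    moreover have "real (p2+1) * (L / (real p2 + 1))^3/12 = L^3/(12*(real p2+1)^2)"
      using cube_aux[of "real p2 + 1" L] by (simp add: add.commute)
    ultimately show ?thesis by simp
  qed
  have s1: "integral {0..1} (hS \<gamma>) = integral {0..a1} (hS \<gamma>) + integral {a1..b1} (hS \<gamma>)
     + integral {b1..a2} (hS \<gamma>) + integral {a2..b2} (hS \<gamma>) + integral {b2..1} (hS \<gamma>)"
    by (rule split5[OF fg(1) neg(1)]) (use o in auto)
  have s2: "integral {0..1} (hS \<gamma>') = integral {0..a1} (hS \<gamma>') + integral {a1..b1} (hS \<gamma>')
     + integral {b1..a2} (hS \<gamma>') + integral {a2..b2} (hS \<gamma>') + integral {b2..1} (hS \<gamma>')"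
    by (rule split5[OF fg(2) neg(2)]) (use o in auto)
  have "integral {0..1} (hS \<gamma>') < integral {0..1} (hS \<gamma>)"
    using s1 s2 o1 o2 o3 l1 l2 u1 u2 ineq by linarith
  then show ?thesis using fa' card_ok unfolding \<gamma>'_def by blast
qed




lemma gdec:
  fixes x y :: real assumes "0 < x" "x < y"
  shows "1/y^2 - 1/(y+1)^2 < 1/x^2 - 1/(x+1)^2"
proof -
  have g: "1/z^2 - 1/(z+1)^2 = (2*z+1)/(z^2*(z+1)^2)" if "z > 0" for z :: real
  proof -
    have "z \<noteq> 0" "z + 1 \<noteq> 0" using that by auto
    then show ?thesis by (simp add: divide_simps) (simp add: algebra_simps power2_eq_square)
  qed
  have gx: "1/x^2 - 1/(x+1)^2 = (2*x+1)/(x^2*(x+1)^2)" using g assms by simp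
  have gy: "1/y^2 - 1/(y+1)^2 = (2*y+1)/(y^2*(y+1)^2)" using g assms by simp
  have a1: "(2*y+1)*x \<le> (2*x+1)*y" using assms by (simp add: algebra_simps)
  have a2: "x*(x+1)^2 < y*(y+1)^2"
    using assms by (intro mult_strict_mono power_strict_mono) auto
  have "(2*y+1) * (x^2*(x+1)^2) = ((2*y+1)*x) * (x*(x+1)^2)" by (simp add: power2_eq_square)
  also have "\<dots> \<le> ((2*x+1)*y) * (x*(x+1)^2)"
    using a1 assms by (intro mult_right_mono) auto
  also have "\<dots> < ((2*x+1)*y) * (y*(y+1)^2)"
    using a2 assms by (intro mult_strict_left_mono) auto
  also have "\<dots> = (2*x+1) * (y^2*(y+1)^2)" by (simp add: power2_eq_square)
  finally have "(2*y+1) * (x^2*(x+1)^2) < (2*x+1) * (y^2*(y+1)^2)" .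
  then have "(2*y+1)/(y^2*(y+1)^2) < (2*x+1)/(x^2*(x+1)^2)"
    using assms by (simp add: frac_less_eq field_simps)
  then show ?thesis using gx gy by simp
qed

lemma conv:
  fixes L :: real and M Q :: nat
  assumes "L > 0" "M \<ge> Q + 2"
  shows "L^3/(12*(real (M-1)+1)^2) + L^3/(12*(real (Q+1)+1)^2) < L^3/(12*(real M+1)^2) + L^3/(12*(real Q+1)^2)"
proof -
  have rM: "real (M-1) + 1 = real M" using assms by auto
  have "1/(real M)^2 - 1/(real M+1)^2 < 1/(real Q + 1)^2 - 1/((real Q + 1)+1)^2"
    by (rule gdec) (use assms in auto)
  then have "1/(real M)^2 + 1/(real Q + 2)^2 < 1/(real M+1)^2 + 1/(real Q + 1)^2"
    by (simp add: add.assoc)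
  then have "L^3/12 * (1/(real M)^2 + 1/(real Q + 2)^2) < L^3/12 * (1/(real M+1)^2 + 1/(real Q + 1)^2)"
    using assms by (intro mult_strict_left_mono) auto
  then show ?thesis unfolding rM by (simp add: field_simps add.assoc)
qed




theorem lemma4p2:
  fixes k n :: nat and \<alpha>n :: "real set"
  assumes "n \<ge> k"
    and "cond_optimal_set (uniform_measure lborel {0..1}) {real j / real k | j. 1 \<le> j \<and> j \<le> k} n \<alpha>n"
    and "2 \<le> i" and "i < j" and "j \<le> k"
  shows "\<bar>int (card (\<alpha>n \<inter> {(real i - 1) / real k .. real i / real k}))
          - int (card (\<alpha>n \<inter> {(real j - 1) / real k .. real j / real k}))\<bar> \<in> {0, 1}"
proof -
  define P where "P = uniform_measure lborel {0..1::real}"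
  define \<beta> where "\<beta> = {real j / real k | j. 1 \<le> j \<and> j \<le> k}"
  have k2: "k \<ge> 2" using assms by auto
  have kpos: "real k > 0" using k2 by simp
  from assms(2) have opt: "cond_optimal_set P \<beta> n \<alpha>n" unfolding P_def \<beta>_def .
  then obtain \<alpha> where fb: "finite \<beta>" and fa: "finite \<alpha>" and ca: "card \<alpha> \<le> n - card \<beta>"
    and g: "\<alpha>n = \<alpha> \<union> \<beta>" and dq: "distortion P \<alpha>n = cond_quant_error P \<beta> n"
    unfolding cond_optimal_set_def by blast
  have inb: "real l / real k \<in> \<beta>" if "1 \<le> l" "l \<le> k" for l
    using that unfolding \<beta>_def by blast
  have inb1: "(real l - 1) / real k \<in> \<beta>" if "2 \<le> l" "l \<le> k" for l
  proof -
    have "real (l - 1) = real l - 1" using that by auto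
    then show ?thesis using inb[of "l - 1"] that by simp
  qed
  have disj: "\<beta> \<inter> {(real l - 1) / real k <..< real l / real k} = {}" for l
  proof (rule ccontr)
    assume "\<beta> \<inter> {(real l - 1) / real k <..< real l / real k} \<noteq> {}"
    then obtain q where "(real l - 1) / real k < real q / real k" "real q / real k < real l / real k"
      unfolding \<beta>_def by auto
    then have "real l - 1 < real q" "real q < real l" using kpos by (auto simp: divide_less_cancel)
    then have "real l < real (q + 1)" "q < l" by auto
    then have "l < q + 1" "q < l" by (simp_all only: of_nat_less_iff)
    then show False by linarith
  qed
  define a where "a l = (real l - 1) / real k" for l :: nat
  define b where "b l = real l / real k" for l :: nat
  define m where "m l = card (\<alpha>n \<inter> {a l <..< b l})" for l
  have ab: "a l < b l" for l unfolding a_def b_def using kpos by (simp add: divide_strict_right_mono)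
  have fan: "finite \<alpha>n" using fa fb g by auto
  have cnt: "card (\<alpha>n \<inter> {a l .. b l}) = m l + 2" if "2 \<le> l" "l \<le> k" for l
  proof -
    have "\<alpha>n \<inter> {a l .. b l} = insert (a l) (insert (b l) (\<alpha>n \<inter> {a l <..< b l}))"
      using inb[of l] inb1[of l] that ab[of l] g unfolding a_def b_def by auto
    then show ?thesis unfolding m_def using fan ab[of l] by simp
  qed
  have Lb: "b l = a l + 1 / real k" for l unfolding a_def b_def by (simp add: diff_divide_distrib)
  have bnd: "bdd_below {distortion P (\<alpha> \<union> \<beta>) | \<alpha>. finite \<alpha> \<and> card \<alpha> \<le> n - card \<beta>}"
  proof (rule bdd_belowI[of _ 0])
    fix x assume "x \<in> {distortion P (\<alpha> \<union> \<beta>) | \<alpha>. finite \<alpha> \<and> card \<alpha> \<le> n - card \<beta>}"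
    then obtain \<alpha>' where "x = distortion P (\<alpha>' \<union> \<beta>)" "finite \<alpha>'" by auto
    moreover have "\<beta> \<noteq> {}" using inb[of k] k2 by auto
    ultimately show "0 \<le> x" unfolding distortion_def
      using fb by (auto intro!: Bochner_Integration.integral_nonneg simp: Min_ge_iff)
  qed
  have key: False if "m i1 \<ge> m i2 + 2" "2 \<le> i1" "i1 \<le> k" "2 \<le> i2" "i2 \<le> k" "i1 \<noteq> i2" for i1 i2
  proof -
    define l1 where "l1 = min i1 i2"
    define l2 where "l2 = max i1 i2"
    have l12: "2 \<le> l1" "l1 < l2" "l2 \<le> k" using that unfolding l1_def l2_def by auto
    define p1 where "p1 = (if l1 = i1 then m l1 - 1 else m l1 + 1)"
    define p2 where "p2 = (if l1 = i1 then m l2 + 1 else m l2 - 1)"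
    have pp: "p1 + p2 = m l1 + m l2" using that unfolding p1_def p2_def l1_def l2_def by auto
    have Lpos: "1 / real k > 0" using kpos by simp
    have iq: "(1/real k)^3/(12*(real p1+1)^2) + (1/real k)^3/(12*(real p2+1)^2)
        < (1/real k)^3/(12*(real (m l1)+1)^2) + (1/real k)^3/(12*(real (m l2)+1)^2)"
    proof (cases "l1 = i1")
      case True
      then have "l2 = i2" unfolding l1_def l2_def by auto
      then show ?thesis using conv[OF Lpos, of i2 "m i1"] conv[OF Lpos that(1)] True unfolding p1_def p2_def by simp
    next
      case False
      then have "l1 = i2" "l2 = i1" unfolding l1_def l2_def by auto
      then show ?thesis using conv[OF Lpos that(1)] False unfolding p1_def p2_def by (simp add: add.commute)
    qed
    have "a l1 < b l1" "b l1 \<le> a l2" "a l2 < b l2" "0 \<le> a l1" "b l2 \<le> 1"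
      using ab l12 kpos unfolding a_def b_def by (auto simp: divide_right_mono field_simps)
    then obtain \<alpha>' where a': "finite \<alpha>'" "card \<alpha>' \<le> card \<alpha>"
      "integral {0..1} (hS (\<alpha>' \<union> \<beta>)) < integral {0..1} (hS \<alpha>n)"
      using core[OF fa fb g, of "a l1" "b l1" "a l2" "b l2" "1 / real k" "m l1" "m l2" p1 p2]
        Lb inb[of l1] inb1[of l1] inb[of l2] inb1[of l2] l12 disj[of l1] disj[of l2] pp iq
      unfolding m_def a_def b_def by auto
    have ne: "\<beta> \<noteq> {}" using inb[of k] k2 by auto
    have "distortion P (\<alpha>' \<union> \<beta>) < distortion P \<alpha>n"
      using a' distortion_eq[of "\<alpha>' \<union> \<beta>"] distortion_eq[of \<alpha>n] fb fan ne g unfolding P_def by auto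
    also have "\<dots> \<le> distortion P (\<alpha>' \<union> \<beta>)"
      unfolding dq cond_quant_error_def
      by (rule cInf_lower[OF _ bnd]) (use a' ca in auto)
    finally show False by simp
  qed
  have ij: "2 \<le> i" "i \<le> k" "2 \<le> j" "j \<le> k" "i \<noteq> j" "j \<noteq> i" using assms by auto
  have "\<not> m i \<ge> m j + 2" using key[OF _ ij(1-4,5)] by blast
  moreover have "\<not> m j \<ge> m i + 2" using key[OF _ ij(3,4,1,2,6)] by blast
  ultimately show ?thesis using cnt[of i] cnt[of j] assms unfolding a_def b_def by auto
qed


end
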